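(* Let $t=\alpha^\mu\beta^\nu$ with $\mu\in\mathbb{Z}_{\ge0}^m$ and $\nu\in\{0,\dots,m\}^n$ non-increasing. If $t$ has a sorted syl-representation, then $t$ has a sorted-flushed syl-representation.
   Context: For $M\in\{0,1\}^{m\times n}$: $rs(M)=(\sum_j M_{ij})_i$; $cs(M)=(\sum_i M_{ij})_j$; $ars(M)=(i+\sum_j M_{ij})_{i=1..m}$; $acs(M)=(j+\sum_i M_{ij})_{j=1..n}$. $PC(A,B)$ means $\{acs(A)_1,\dots,acs(A)_n,ars(B)_1,\dots,ars(B)_m\}=\{1,\dots,m+n\}$. A syl-representation of $\alpha^\mu\beta^\nu$ is a pair $(\mathcal{S}_1,\mathcal{S}_2)$ in $\{0,1\}^{m\times n}$ with $rs(\mathcal{S}_1)=\mu$, $cs(\mathcal{S}_2)=\nu$, $PC(\mathcal{S}_1,\mathcal{S}_2)$. $M$ is bottom-left flushed if whenever $M_{ij}=1$, also $M_{i'j'}=1$ for all $i'\ge i$, $j'\le j$. A pair $(A,B)$ is sorted if $acs(A)$ and $ars(B)$ are strictly increasing, flushed if $B$ is bottom-left flushed, sorted-flushed if both. *)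

theory Defs
  imports Main
begin

text \<open>Matrices in {0,1}^(m x n) are functions nat => nat => nat, indexed 1-based
 (rows 1..m, columns 1..n), with entries in {0,1} on that range.\<close>

definition is01 :: "nat \<Rightarrow> nat \<Rightarrow> (nat \<Rightarrow> nat \<Rightarrow> nat) \<Rightarrow> bool" where
  "is01 m n M \<longleftrightarrow> (\<forall>i\<in>{1..m}. \<forall>j\<in>{1..n}. M i j \<in> {0,1})"

definition rs :: "nat \<Rightarrow> (nat \<Rightarrow> nat \<Rightarrow> nat) \<Rightarrow> nat \<Rightarrow> nat" where
  "rs n M i = (\<Sum>j=1..n. M i j)"

definition cs :: "nat \<Rightarrow> (nat \<Rightarrow> nat \<Rightarrow> nat) \<Rightarrow> nat \<Rightarrow> nat" where
  "cs m M j = (\<Sum>i=1..m. M i j)"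

definition ars :: "nat \<Rightarrow> (nat \<Rightarrow> nat \<Rightarrow> nat) \<Rightarrow> nat \<Rightarrow> nat" where
  "ars n M i = i + rs n M i"

definition acs :: "nat \<Rightarrow> (nat \<Rightarrow> nat \<Rightarrow> nat) \<Rightarrow> nat \<Rightarrow> nat" where
  "acs m M j = j + cs m M j"

definition PC :: "nat \<Rightarrow> nat \<Rightarrow> (nat \<Rightarrow> nat \<Rightarrow> nat) \<Rightarrow> (nat \<Rightarrow> nat \<Rightarrow> nat) \<Rightarrow> bool" where
  "PC m n A B \<longleftrightarrow> acs m A ` {1..n} \<union> ars n B ` {1..m} = {1..m+n}"

definition syl_rep :: "nat \<Rightarrow> nat \<Rightarrow> (nat \<Rightarrow> nat) \<Rightarrow> (nat \<Rightarrow> nat)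
    \<Rightarrow> (nat \<Rightarrow> nat \<Rightarrow> nat) \<Rightarrow> (nat \<Rightarrow> nat \<Rightarrow> nat) \<Rightarrow> bool" where
  "syl_rep m n \<mu> \<nu> S1 S2 \<longleftrightarrow> is01 m n S1 \<and> is01 m n S2
     \<and> (\<forall>i\<in>{1..m}. rs n S1 i = \<mu> i) \<and> (\<forall>j\<in>{1..n}. cs m S2 j = \<nu> j)
     \<and> PC m n S1 S2"

definition bl_flushed :: "nat \<Rightarrow> nat \<Rightarrow> (nat \<Rightarrow> nat \<Rightarrow> nat) \<Rightarrow> bool" where
  "bl_flushed m n M \<longleftrightarrow> (\<forall>i\<in>{1..m}. \<forall>j\<in>{1..n}. M i j = 1 \<longrightarrow>
     (\<forall>i'\<in>{i..m}. \<forall>j'\<in>{1..j}. M i' j' = 1))"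

definition sorted_pair :: "nat \<Rightarrow> nat \<Rightarrow> (nat \<Rightarrow> nat \<Rightarrow> nat) \<Rightarrow> (nat \<Rightarrow> nat \<Rightarrow> nat) \<Rightarrow> bool" where
  "sorted_pair m n A B \<longleftrightarrow> strict_mono_on {1..n} (acs m A) \<and> strict_mono_on {1..m} (ars n B)"

definition flushed_pair :: "nat \<Rightarrow> nat \<Rightarrow> (nat \<Rightarrow> nat \<Rightarrow> nat) \<Rightarrow> (nat \<Rightarrow> nat \<Rightarrow> nat) \<Rightarrow> bool" where
  "flushed_pair m n A B \<longleftrightarrow> bl_flushed m n B"

end

theory Submission
  imports Defs
begin


lemma part_disj:
  fixes f g :: "nat \<Rightarrow> nat"
  assumes "f ` {1..p} \<union> g ` {1..q} = {1..p+q}"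
  shows "f ` {1..p} \<inter> g ` {1..q} = {}"
proof -
  have c1: "card (f ` {1..p} \<union> g ` {1..q}) + card (f ` {1..p} \<inter> g ` {1..q}) = card (f ` {1..p}) + card (g ` {1..q})"
    using card_Un_Int[of "f ` {1..p}" "g ` {1..q}"] by simp
  have c2: "card (f ` {1..p}) \<le> p" using card_image_le[of "{1..p}" f] by simp
  have c3: "card (g ` {1..q}) \<le> q" using card_image_le[of "{1..q}" g] by simp
  have c4: "card (f ` {1..p} \<union> g ` {1..q}) = p + q" using assms by simp
  have "card (f ` {1..p} \<inter> g ` {1..q}) = 0" using c1 c2 c3 c4 by linarith
  moreover have "finite (f ` {1..p} \<inter> g ` {1..q})" by simp
  ultimately show ?thesis by (meson card_0_eq)
qed

lemma part_count:
  fixes f g :: "nat \<Rightarrow> nat"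
  assumes sf: "strict_mono_on {1..p} f" and sg: "strict_mono_on {1..q} g"
    and U: "f ` {1..p} \<union> g ` {1..q} = {1..p+q}" and x: "x \<in> {1..p}"
  shows "f x = x + card {y\<in>{1..q}. g y < f x}"
proof -
  have D: "f ` {1..p} \<inter> g ` {1..q} = {}" using part_disj[OF U] .
  have fx: "f x \<in> {1..p+q}" using U x by blast
  have eq: "{1..<f x} = f ` {1..<x} \<union> g ` {y\<in>{1..q}. g y < f x}"
  proof
    show "{1..<f x} \<subseteq> f ` {1..<x} \<union> g ` {y\<in>{1..q}. g y < f x}"
    proof
      fix z assume z: "z \<in> {1..<f x}"
      then have "z \<in> {1..p+q}" using fx by auto
      then have "z \<in> f ` {1..p} \<or> z \<in> g ` {1..q}" using U by blast
      then show "z \<in> f ` {1..<x} \<union> g ` {y\<in>{1..q}. g y < f x}"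
      proof
        assume "z \<in> f ` {1..p}"
        then obtain x' where x': "x' \<in> {1..p}" "z = f x'" by blast
        then have "x' < x" using strict_mono_on_less[OF sf x'(1) x] z by auto
        then show ?thesis using x' by auto
      next
        assume "z \<in> g ` {1..q}"
        then show ?thesis using z by auto
      qed
    qed
  next
    show "f ` {1..<x} \<union> g ` {y\<in>{1..q}. g y < f x} \<subseteq> {1..<f x}"
    proof
      fix z assume "z \<in> f ` {1..<x} \<union> g ` {y\<in>{1..q}. g y < f x}"
      then show "z \<in> {1..<f x}"
      proof
        assume "z \<in> f ` {1..<x}"
        then obtain x' where x': "x' \<in> {1..<x}" "z = f x'" by blast
        then have x'p: "x' \<in> {1..p}" using x by auto
        then have "f x' < f x" using strict_mono_on_less[OF sf x'p x] x' by auto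
        moreover have "f x' \<in> {1..p+q}" using U x'p by blast
        ultimately show ?thesis using x' by auto
      next
        assume "z \<in> g ` {y\<in>{1..q}. g y < f x}"
        then obtain y where y: "y \<in> {1..q}" "g y < f x" "z = g y" by blast
        moreover have "g y \<in> {1..p+q}" using U y by blast
        ultimately show ?thesis by auto
      qed
    qed
  qed
  have i1: "inj_on f {1..<x}"
    using strict_mono_on_imp_inj_on[OF sf] x by (auto intro: inj_on_subset)
  have i2: "inj_on g {y\<in>{1..q}. g y < f x}"
    using strict_mono_on_imp_inj_on[OF sg] by (rule inj_on_subset) auto
  have dj: "f ` {1..<x} \<inter> g ` {y\<in>{1..q}. g y < f x} = {}"
  proof -
    have "f ` {1..<x} \<subseteq> f ` {1..p}" using x by auto
    moreover have "g ` {y\<in>{1..q}. g y < f x} \<subseteq> g ` {1..q}" by auto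
    ultimately show ?thesis using D by blast
  qed
  have "card {1..<f x} = card (f ` {1..<x}) + card (g ` {y\<in>{1..q}. g y < f x})"
    unfolding eq by (rule card_Un_disjoint) (use dj in auto)
  also have "\<dots> = (x - 1) + card {y\<in>{1..q}. g y < f x}"
    using card_image[OF i1] card_image[OF i2] by simp
  finally have "f x - 1 = x - 1 + card {y\<in>{1..q}. g y < f x}" by simp
  then show ?thesis using fx x by auto
qed




definition PS :: "(nat \<Rightarrow> nat) \<Rightarrow> nat \<Rightarrow> nat" where
  "PS f k = (\<Sum>j=1..k. f j)"

lemma step_lemma:
  assumes X: "is01 m n X" and i: "i \<in> {1..m}" and j0: "j0 \<in> {1..n}" and l: "l \<in> {1..n}"
    and ne: "j0 \<noteq> l" and a: "X i j0 = 1" and b: "X i l = 0"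
    and X': "X' = X(i := (X i)(j0 := 0, l := 1))"
  shows "is01 m n X'" and "\<forall>i'\<in>{1..m}. rs n X' i' = rs n X i'"
    and "\<forall>j\<in>{1..n}. int (cs m X' j) = int (cs m X j) - (if j = j0 then 1 else 0) + (if j = l then 1 else 0)"
proof -
  show "is01 m n X'" using X unfolding X' is01_def by auto
  have e: "\<And>i' j. int (X' i' j) = int (X i' j) - (if i' = i \<and> j = j0 then 1 else 0) + (if i' = i \<and> j = l then 1 else 0)"
    using a b ne unfolding X' by auto
  show "\<forall>i'\<in>{1..m}. rs n X' i' = rs n X i'"
  proof
    fix i' assume "i' \<in> {1..m}"
    have "int (rs n X' i') = (\<Sum>j=1..n. int (X' i' j))" unfolding rs_def by simp
    also have "\<dots> = (\<Sum>j=1..n. int (X i' j) - (if i' = i \<and> j = j0 then 1 else 0) + (if i' = i \<and> j = l then 1 else 0))"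
      using e by simp
    also have "\<dots> = (\<Sum>j=1..n. int (X i' j)) - (\<Sum>j=1..n. (if i' = i \<and> j = j0 then 1 else 0)) + (\<Sum>j=1..n. (if i' = i \<and> j = l then 1 else 0))"
      by (simp add: sum.distrib sum_subtractf)
    also have "\<dots> = (\<Sum>j=1..n. int (X i' j))" using j0 l by (cases "i' = i") auto
    also have "\<dots> = int (rs n X i')" unfolding rs_def by simp
    finally show "rs n X' i' = rs n X i'" by simp
  qed
  show "\<forall>j\<in>{1..n}. int (cs m X' j) = int (cs m X j) - (if j = j0 then 1 else 0) + (if j = l then 1 else 0)"
  proof
    fix j assume "j \<in> {1..n}"
    have "int (cs m X' j) = (\<Sum>i'=1..m. int (X' i' j))" unfolding cs_def by simp
    also have "\<dots> = (\<Sum>i'=1..m. int (X i' j) - (if i' = i \<and> j = j0 then 1 else 0) + (if i' = i \<and> j = l then 1 else 0))"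
      using e by simp
    also have "\<dots> = (\<Sum>i'=1..m. int (X i' j)) - (\<Sum>i'=1..m. (if i' = i \<and> j = j0 then 1 else 0)) + (\<Sum>i'=1..m. (if i' = i \<and> j = l then 1 else 0))"
      by (simp add: sum.distrib sum_subtractf)
    also have "\<dots> = (\<Sum>i'=1..m. int (X i' j)) - (if j = j0 then 1 else 0) + (if j = l then 1 else 0)"
      using i by (cases "j = j0"; cases "j = l") auto
    also have "\<dots> = int (cs m X j) - (if j = j0 then 1 else 0) + (if j = l then 1 else 0)" unfolding cs_def by simp
    finally show "int (cs m X' j) = int (cs m X j) - (if j = j0 then 1 else 0) + (if j = l then 1 else 0)" .
  qed
qed

lemma PS_step:
  assumes "\<forall>j\<in>{1..n}. int (c' j) = int (c j) - (if j = j0 then 1 else 0) + (if j = l then 1 else 0)"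
    and "j0 \<in> {1..n}" "l \<in> {1..n}" "k \<le> n"
  shows "int (PS c' k) = int (PS c k) - (if j0 \<le> k then 1 else 0) + (if l \<le> k then 1 else 0)"
proof -
  have "int (PS c' k) = (\<Sum>j=1..k. int (c' j))" unfolding PS_def by simp
  also have "\<dots> = (\<Sum>j=1..k. int (c j) - (if j = j0 then 1 else 0) + (if j = l then 1 else 0))"
    using assms by (intro sum.cong) auto
  also have "\<dots> = (\<Sum>j=1..k. int (c j)) - (\<Sum>j=1..k. (if j = j0 then 1 else 0)) + (\<Sum>j=1..k. (if j = l then 1 else 0))"
    by (simp add: sum.distrib sum_subtractf)
  also have "\<dots> = int (PS c k) - (if j0 \<le> k then 1 else 0) + (if l \<le> k then 1 else 0)"
    using assms unfolding PS_def by simp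
  finally show ?thesis .
qed




lemma PS_Suc: "PS f (Suc k) = PS f k + f (Suc k)"
  unfolding PS_def by simp

lemma transfer:
  fixes q :: "nat \<Rightarrow> nat"
  assumes qmono: "\<forall>j\<in>{1..n}. \<forall>j'\<in>{1..n}. j \<le> j' \<longrightarrow> q j' \<le> q j"
  shows "is01 m n X \<Longrightarrow> (\<forall>k\<le>n. PS q k \<le> PS (cs m X) k) \<Longrightarrow> PS q n = PS (cs m X) n
     \<Longrightarrow> \<exists>Y. is01 m n Y \<and> (\<forall>i\<in>{1..m}. rs n Y i = rs n X i) \<and> (\<forall>j\<in>{1..n}. cs m Y j = q j)"
proof (induction "\<Sum>k=1..n. PS (cs m X) k - PS q k" arbitrary: X rule: less_induct)
  case less
  note X01 = less.prems(1) and dom = less.prems(2) and tot = less.prems(3)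
  show ?case
  proof (cases "\<forall>j\<in>{1..n}. cs m X j = q j")
    case True
    then show ?thesis using X01 by blast
  next
    case False
    define j0 where "j0 = (LEAST j. j \<in> {1..n} \<and> cs m X j \<noteq> q j)"
    have ex: "\<exists>j. j \<in> {1..n} \<and> cs m X j \<noteq> q j" using False by blast
    have j0: "j0 \<in> {1..n}" "cs m X j0 \<noteq> q j0"
      using LeastI_ex[OF ex] unfolding j0_def by auto
    have below: "\<And>j. j \<in> {1..n} \<Longrightarrow> j < j0 \<Longrightarrow> cs m X j = q j"
      using not_less_Least unfolding j0_def by blast
    obtain j1 where j1: "j0 = Suc j1" using j0 by (cases j0) auto
    have "PS (cs m X) j1 = PS q j1" unfolding PS_def
      using below j0 j1 by (intro sum.cong) auto
    moreover have "PS q j0 \<le> PS (cs m X) j0" using dom j0 by auto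
    ultimately have cj0: "q j0 < cs m X j0" using j0 j1 PS_Suc[of q j1] PS_Suc[of "cs m X" j1] by auto
    have gj0: "PS q j0 < PS (cs m X) j0"
      using \<open>PS (cs m X) j1 = PS q j1\<close> cj0 j1 PS_Suc[of q j1] PS_Suc[of "cs m X" j1] by auto
    define l where "l = (LEAST l. j0 \<le> l \<and> l \<le> n \<and> PS (cs m X) l = PS q l)"
    have exl: "\<exists>l. j0 \<le> l \<and> l \<le> n \<and> PS (cs m X) l = PS q l" using j0 tot by auto
    have l: "j0 \<le> l" "l \<le> n" "PS (cs m X) l = PS q l"
      using LeastI_ex[OF exl] unfolding l_def by auto
    have betw: "\<And>k. j0 \<le> k \<Longrightarrow> k < l \<Longrightarrow> PS q k < PS (cs m X) k"
    proof -
      fix k assume "j0 \<le> k" "k < l"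
      then have "PS (cs m X) k \<noteq> PS q k"
        using not_less_Least[of k "\<lambda>l. j0 \<le> l \<and> l \<le> n \<and> PS (cs m X) l = PS q l"] l
        unfolding l_def[symmetric] by auto
      moreover have "PS q k \<le> PS (cs m X) k" using dom \<open>k < l\<close> l by auto
      ultimately show "PS q k < PS (cs m X) k" by auto
    qed
    have jl: "j0 < l" using l gj0 by (cases "j0 = l") auto
    obtain l1 where l1: "l = Suc l1" using jl by (cases l) auto
    have "PS q l1 < PS (cs m X) l1" using betw jl l1 by auto
    then have cl: "cs m X l < q l"
      using l(3) l1 PS_Suc[of q l1] PS_Suc[of "cs m X" l1] by auto
    have lin: "l \<in> {1..n}" using l j0 by auto
    have "q l \<le> q j0" using qmono j0 lin jl by auto
    then have cjl: "cs m X l < cs m X j0" using cj0 cl by auto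
    have "\<exists>i\<in>{1..m}. X i j0 = 1 \<and> X i l = 0"
    proof (rule ccontr)
      assume "\<not> ?thesis"
      then have "\<forall>i\<in>{1..m}. X i j0 \<le> X i l" using X01 j0 lin unfolding is01_def by fastforce
      then have "cs m X j0 \<le> cs m X l" unfolding cs_def by (intro sum_mono) auto
      then show False using cjl by auto
    qed
    then obtain i where i: "i \<in> {1..m}" "X i j0 = 1" "X i l = 0" by blast
    define X' where "X' = X(i := (X i)(j0 := 0, l := 1))"
    have jne: "j0 \<noteq> l" using jl by auto
    note st = step_lemma[OF X01 i(1) j0(1) lin jne i(2) i(3) X'_def]
    have PSX': "\<And>k. k \<le> n \<Longrightarrow> int (PS (cs m X') k) = int (PS (cs m X) k) - (if j0 \<le> k then 1 else 0) + (if l \<le> k then 1 else 0)"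
      using PS_step[OF st(3) j0(1) lin] by blast
    have dom': "\<forall>k\<le>n. PS q k \<le> PS (cs m X') k"
    proof (intro allI impI)
      fix k assume k: "k \<le> n"
      show "PS q k \<le> PS (cs m X') k"
      proof (cases "j0 \<le> k \<and> k < l")
        case True
        then show ?thesis using PSX'[OF k] betw[of k] by auto
      next
        case False
        then show ?thesis using PSX'[OF k] dom k jl by auto
      qed
    qed
    have tot': "PS q n = PS (cs m X') n" using PSX'[of n] tot l jl by auto
    have less': "(\<Sum>k=1..n. PS (cs m X') k - PS q k) < (\<Sum>k=1..n. PS (cs m X) k - PS q k)"
    proof (rule sum_strict_mono_ex1)
      show "\<forall>k\<in>{1..n}. PS (cs m X') k - PS q k \<le> PS (cs m X) k - PS q k"
      proof
        fix k assume k: "k \<in> {1..n}"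
        then show "PS (cs m X') k - PS q k \<le> PS (cs m X) k - PS q k"
          using PSX'[of k] jl by (cases "j0 \<le> k \<and> k < l") auto
      qed
      show "\<exists>k\<in>{1..n}. PS (cs m X') k - PS q k < PS (cs m X) k - PS q k"
        using PSX'[of j0] j0 jl gj0 by (intro bexI[of _ j0]) auto
    qed simp
    obtain Y where Y: "is01 m n Y" "\<forall>i\<in>{1..m}. rs n Y i = rs n X' i" "\<forall>j\<in>{1..n}. cs m Y j = q j"
      using less.hyps[OF less' st(1) dom' tot'] by blast
    then show ?thesis using st(2) by auto
  qed
qed




lemma card_filter_sum: "finite S \<Longrightarrow> card {x\<in>S. P x} = (\<Sum>x\<in>S. if P x then 1 else 0)"
  by (simp add: sum.If_cases Int_def)

lemma le1: "is01 m n M \<Longrightarrow> i \<in> {1..m} \<Longrightarrow> j \<in> {1..n} \<Longrightarrow> M i j \<le> 1"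
  unfolding is01_def by fastforce

lemma rs_le: "is01 m n M \<Longrightarrow> i \<in> {1..m} \<Longrightarrow> rs n M i \<le> n"
proof -
  assume "is01 m n M" "i \<in> {1..m}"
  then have "rs n M i \<le> (\<Sum>j=1..n. 1)" unfolding rs_def apply (intro sum_mono) using le1[of m n M] by auto
  then show ?thesis by simp
qed

lemma cs_le: "is01 m n M \<Longrightarrow> j \<in> {1..n} \<Longrightarrow> cs m M j \<le> m"
proof -
  assume "is01 m n M" "j \<in> {1..n}"
  then have "cs m M j \<le> (\<Sum>i=1..m. 1)" unfolding cs_def apply (intro sum_mono) using le1[of m n M] by auto
  then show ?thesis by simp
qed

lemma compl_rs: "is01 m n M \<Longrightarrow> i \<in> {1..m} \<Longrightarrow> rs n (\<lambda>i j. 1 - M i j) i = n - rs n M i"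
  unfolding rs_def apply (subst sum_subtractf_nat) using le1[of m n M] by auto

lemma compl_cs: "is01 m n M \<Longrightarrow> j \<in> {1..n} \<Longrightarrow> cs m (\<lambda>i j. 1 - M i j) j = m - cs m M j"
  unfolding cs_def apply (subst sum_subtractf_nat) using le1[of m n M] by auto

lemma compl_01: "is01 m n M \<Longrightarrow> is01 m n (\<lambda>i j. 1 - M i j)"
  unfolding is01_def by auto

lemma key_identity:
  assumes sA: "strict_mono_on {1..n} (acs m A)" and sB: "strict_mono_on {1..m} (ars n B)"
    and U: "acs m A ` {1..n} \<union> ars n B ` {1..m} = {1..m+n}" and k: "k \<le> n"
  shows "PS (cs m A) k + (\<Sum>i=1..m. min (rs n B i) k) = k * m"
proof -
  have U1: "acs m A ` {1..n} \<union> ars n B ` {1..m} = {1..n+m}" using U by (simp add: add.commute)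
  have U2: "ars n B ` {1..m} \<union> acs m A ` {1..n} = {1..m+n}" using U by blast
  have D: "acs m A ` {1..n} \<inter> ars n B ` {1..m} = {}" using part_disj[OF U1] .
  have cA: "\<And>j. j \<in> {1..n} \<Longrightarrow> cs m A j = card {i\<in>{1..m}. ars n B i < acs m A j}"
    using part_count[OF sA sB U1] unfolding acs_def by force
  have rB: "\<And>i. i \<in> {1..m} \<Longrightarrow> rs n B i = card {j\<in>{1..n}. acs m A j < ars n B i}"
    using part_count[OF sB sA U2] unfolding ars_def by force
  have cA': "cs m A j = (\<Sum>i=1..m. if ars n B i < acs m A j then 1 else 0)" if "j \<in> {1..n}" for j
    using cA[OF that] card_filter_sum[of "{1..m}" "\<lambda>i. ars n B i < acs m A j"] by simp
  have "PS (cs m A) k = (\<Sum>j=1..k. \<Sum>i=1..m. if ars n B i < acs m A j then 1 else 0)"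
    unfolding PS_def using k by (intro sum.cong) (auto simp: cA')
  also have "\<dots> = (\<Sum>i=1..m. \<Sum>j=1..k. if ars n B i < acs m A j then 1 else 0)"
    by (rule sum.swap)
  also have "\<dots> = (\<Sum>i=1..m. card {j\<in>{1..k}. ars n B i < acs m A j})"
  proof (rule sum.cong[OF refl])
    fix i show "(\<Sum>j=1..k. if ars n B i < acs m A j then 1 else 0) = card {j\<in>{1..k}. ars n B i < acs m A j}"
      using card_filter_sum[of "{1..k}" "\<lambda>j. ars n B i < acs m A j"] by simp
  qed
  finally have PSe: "PS (cs m A) k = (\<Sum>i=1..m. card {j\<in>{1..k}. ars n B i < acs m A j})" .
  have each: "card {j\<in>{1..k}. ars n B i < acs m A j} + min (rs n B i) k = k" if i: "i \<in> {1..m}" for i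
  proof -
    define T where "T = {j\<in>{1..n}. acs m A j < ars n B i}"
    have rT: "rs n B i = card T" using rB[OF i] unfolding T_def .
    have ne: "\<And>j. j \<in> {1..n} \<Longrightarrow> acs m A j \<noteq> ars n B i" using D i by blast
    have "{j\<in>{1..k}. ars n B i < acs m A j} = {1..k} - T"
      unfolding T_def using k ne by force
    then have c1: "card {j\<in>{1..k}. ars n B i < acs m A j} = k - card ({1..k} \<inter> T)"
      by (simp add: card_Diff_subset_Int)
    have ft: "finite T" unfolding T_def by simp
    have "card ({1..k} \<inter> T) = min (card T) k"
    proof (cases "T \<subseteq> {1..k}")
      case True
      then have "{1..k} \<inter> T = T" by blast
      moreover have "card T \<le> k" using card_mono[OF _ True] by simp
      ultimately show ?thesis by simp
    next
      case False
      then obtain j where j: "j \<in> T" "j \<notin> {1..k}" by blast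
      then have jk: "k < j" "j \<in> {1..n}" "acs m A j < ars n B i" unfolding T_def by auto
      have sub: "{1..k} \<subseteq> T"
      proof
        fix j' assume j': "j' \<in> {1..k}"
        then have "j' \<in> {1..n}" using k by auto
        moreover have "acs m A j' < acs m A j"
          using strict_mono_on_less[OF sA \<open>j' \<in> {1..n}\<close> jk(2)] j' jk by auto
        ultimately show "j' \<in> T" unfolding T_def using jk by auto
      qed
      then have "{1..k} \<inter> T = {1..k}" by blast
      moreover have "k \<le> card T" using card_mono[OF ft sub] by simp
      ultimately show ?thesis by simp
    qed
    then show ?thesis using c1 rT by simp
  qed
  have "PS (cs m A) k + (\<Sum>i=1..m. min (rs n B i) k) = (\<Sum>i=1..m. card {j\<in>{1..k}. ars n B i < acs m A j} + min (rs n B i) k)"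
    unfolding PSe by (simp add: sum.distrib)
  also have "\<dots> = (\<Sum>i=1..m. k)" using each by (intro sum.cong) auto
  finally show ?thesis by simp
qed




theorem mainTheorem8:
  fixes m n :: nat and \<mu> \<nu> :: "nat \<Rightarrow> nat"
  assumes "\<forall>j\<in>{1..n}. \<nu> j \<le> m"
    and "\<forall>j\<in>{1..n}. \<forall>j'\<in>{1..n}. j \<le> j' \<longrightarrow> \<nu> j' \<le> \<nu> j"
    and "\<exists>A B. syl_rep m n \<mu> \<nu> A B \<and> sorted_pair m n A B"
  shows "\<exists>A B. syl_rep m n \<mu> \<nu> A B \<and> sorted_pair m n A B \<and> flushed_pair m n A B"
proof -
  note nu_le = assms(1) and nu_mono = assms(2)
  obtain A B where AB: "syl_rep m n \<mu> \<nu> A B" "sorted_pair m n A B" using assms(3) by blast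
  have A01: "is01 m n A" and B01: "is01 m n B" and rA: "\<forall>i\<in>{1..m}. rs n A i = \<mu> i"
    and cB: "\<forall>j\<in>{1..n}. cs m B j = \<nu> j" and U: "acs m A ` {1..n} \<union> ars n B ` {1..m} = {1..m+n}"
    using AB(1) unfolding syl_rep_def PC_def by auto
  have sA: "strict_mono_on {1..n} (acs m A)" and sB: "strict_mono_on {1..m} (ars n B)"
    using AB(2) unfolding sorted_pair_def by auto
  define X where "X = (\<lambda>i j. 1 - A i j)"
  have X01: "is01 m n X" unfolding X_def using compl_01[OF A01] .
  have cX: "\<And>j. j \<in> {1..n} \<Longrightarrow> cs m X j = m - cs m A j" unfolding X_def using compl_cs[OF A01] by blast
  have PSX: "PS (cs m X) k = (\<Sum>i=1..m. min (rs n B i) k)" if k: "k \<le> n" for k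
  proof -
    have "PS (cs m X) k = (\<Sum>j=1..k. m - cs m A j)" unfolding PS_def using k cX by (intro sum.cong) auto
    also have "\<dots> = (\<Sum>j=1..k. m) - PS (cs m A) k" unfolding PS_def
      using k cs_le[OF A01] by (subst sum_subtractf_nat) auto
    also have "\<dots> = (\<Sum>i=1..m. min (rs n B i) k)" using key_identity[OF sA sB U k] by simp
    finally show ?thesis .
  qed
  have PSnu: "PS \<nu> k = (\<Sum>i=1..m. \<Sum>j=1..k. B i j)" if k: "k \<le> n" for k
  proof -
    have "PS \<nu> k = (\<Sum>j=1..k. \<Sum>i=1..m. B i j)" unfolding PS_def cs_def[symmetric] using k cB
      by (intro sum.cong) auto
    also have "\<dots> = (\<Sum>i=1..m. \<Sum>j=1..k. B i j)" by (rule sum.swap)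
    finally show ?thesis .
  qed
  have dom: "\<forall>k\<le>n. PS \<nu> k \<le> PS (cs m X) k"
  proof (intro allI impI)
    fix k assume k: "k \<le> n"
    have "(\<Sum>j=1..k. B i j) \<le> min (rs n B i) k" if i: "i \<in> {1..m}" for i
    proof -
      have "(\<Sum>j=1..k. B i j) \<le> (\<Sum>j=1..k. 1)" apply (intro sum_mono) using le1[OF B01 i] k by auto
      moreover have "(\<Sum>j=1..k. B i j) \<le> rs n B i" unfolding rs_def using k by (intro sum_mono2) auto
      ultimately show ?thesis by simp
    qed
    then have "(\<Sum>i=1..m. \<Sum>j=1..k. B i j) \<le> (\<Sum>i=1..m. min (rs n B i) k)" by (intro sum_mono) auto
    then show "PS \<nu> k \<le> PS (cs m X) k" using PSnu[OF k] PSX[OF k] by simp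
  qed
  have tot: "PS \<nu> n = PS (cs m X) n"
  proof -
    have "(\<Sum>i=1..m. \<Sum>j=1..n. B i j) = (\<Sum>i=1..m. min (rs n B i) n)"
      using rs_le[OF B01] unfolding rs_def[symmetric] by (intro sum.cong) (auto simp: rs_def min_def)
    then show ?thesis using PSnu PSX by simp
  qed
  obtain Y where Y: "is01 m n Y" "\<forall>i\<in>{1..m}. rs n Y i = rs n X i" "\<forall>j\<in>{1..n}. cs m Y j = \<nu> j"
    using transfer[OF nu_mono X01 dom tot] by blast
  define A' where "A' = (\<lambda>i j. 1 - Y i j)"
  define B' where "B' = (\<lambda>i j. if m < i + \<nu> j then 1 else (0::nat))"
  define R where "R = (\<lambda>i. card {j\<in>{1..n}. m < i + \<nu> j})"
  have A'01: "is01 m n A'" unfolding A'_def using compl_01[OF Y(1)] .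
  have B'01: "is01 m n B'" unfolding B'_def is01_def by auto
  have rA': "\<forall>i\<in>{1..m}. rs n A' i = \<mu> i"
  proof
    fix i assume i: "i \<in> {1..m}"
    have "rs n A' i = n - rs n Y i" unfolding A'_def using compl_rs[OF Y(1) i] .
    also have "\<dots> = n - (n - rs n A i)" using Y(2) i compl_rs[OF A01 i] unfolding X_def by simp
    also have "\<dots> = rs n A i" using rs_le[OF A01 i] by simp
    finally show "rs n A' i = \<mu> i" using rA i by simp
  qed
  have cA': "\<And>j. j \<in> {1..n} \<Longrightarrow> cs m A' j = m - \<nu> j"
    unfolding A'_def using compl_cs[OF Y(1)] Y(3) by simp
  have cB': "\<forall>j\<in>{1..n}. cs m B' j = \<nu> j"
  proof
    fix j assume j: "j \<in> {1..n}"
    have "cs m B' j = card {i\<in>{1..m}. m < i + \<nu> j}"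
      unfolding cs_def B'_def using card_filter_sum[of "{1..m}" "\<lambda>i. m < i + \<nu> j"] by simp
    also have "{i\<in>{1..m}. m < i + \<nu> j} = {Suc (m - \<nu> j)..m}" using nu_le j by auto
    also have "card \<dots> = \<nu> j" using nu_le j by simp
    finally show "cs m B' j = \<nu> j" .
  qed
  have rB': "\<And>i. i \<in> {1..m} \<Longrightarrow> rs n B' i = R i"
    unfolding rs_def B'_def R_def using card_filter_sum[of "{1..n}"] by simp
  have acs': "\<And>j. j \<in> {1..n} \<Longrightarrow> acs m A' j = j + (m - \<nu> j)" unfolding acs_def using cA' by simp
  have ars': "\<And>i. i \<in> {1..m} \<Longrightarrow> ars n B' i = i + R i" unfolding ars_def using rB' by simp
  have R_le: "R i \<le> n" for i
  proof -
    have "R i \<le> card {1..n}" unfolding R_def by (intro card_mono) auto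
    then show ?thesis by simp
  qed
  have sA': "strict_mono_on {1..n} (acs m A')"
  proof (rule strict_mono_onI)
    fix j j' assume "j \<in> {1..n}" "j' \<in> {1..n}" "j < j'"
    note jj = this
    have "\<nu> j' \<le> \<nu> j" using nu_mono jj by auto
    moreover have "\<nu> j \<le> m" "\<nu> j' \<le> m" using nu_le jj by auto
    ultimately show "acs m A' j < acs m A' j'" using acs'[OF jj(1)] acs'[OF jj(2)] jj(3) by linarith
  qed
  have sB': "strict_mono_on {1..m} (ars n B')"
  proof (rule strict_mono_onI)
    fix i i' assume ii: "i \<in> {1..m}" "i' \<in> {1..m}" "i < i'"
    have "R i \<le> R i'" unfolding R_def using ii by (intro card_mono) auto
    then show "ars n B' i < ars n B' i'" using ars' ii by simp
  qed
  have disj: "acs m A' ` {1..n} \<inter> ars n B' ` {1..m} = {}"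
  proof (rule ccontr)
    assume "\<not> ?thesis"
    then obtain x where "x \<in> acs m A' ` {1..n}" "x \<in> ars n B' ` {1..m}" by blast
    then obtain j i where ji0: "j \<in> {1..n}" "i \<in> {1..m}" "acs m A' j = ars n B' i" by auto
    then have ji: "j \<in> {1..n}" "i \<in> {1..m}" "j + (m - \<nu> j) = i + R i"
      using acs'[OF ji0(1)] ars'[OF ji0(2)] by auto
    define S where "S = {j\<in>{1..n}. m < i + \<nu> j}"
    have RS: "R i = card S" unfolding R_def S_def ..
    show False
    proof (cases "j \<in> S")
      case True
      have "{1..j} \<subseteq> S"
      proof
        fix j' assume j': "j' \<in> {1..j}"
        then have "j' \<in> {1..n}" using ji by auto
        moreover have "\<nu> j \<le> \<nu> j'" using nu_mono ji j' \<open>j' \<in> {1..n}\<close> by auto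
        ultimately show "j' \<in> S" using True unfolding S_def by auto
      qed
      then have "j \<le> R i" using card_mono[of S "{1..j}"] RS unfolding S_def by simp
      then show False using True ji unfolding S_def by auto
    next
      case False
      have "S \<subseteq> {1..<j}"
      proof
        fix j' assume j': "j' \<in> S"
        show "j' \<in> {1..<j}"
        proof (rule ccontr)
          assume "j' \<notin> {1..<j}"
          then have "j \<le> j'" using j' unfolding S_def by auto
          then have "\<nu> j' \<le> \<nu> j" using nu_mono ji j' unfolding S_def by auto
          then show False using False j' ji unfolding S_def by auto
        qed
      qed
      then have "R i \<le> j - 1" using card_mono[of "{1..<j}" S] RS by simp
      then show False using False ji nu_le unfolding S_def by auto
    qed
  qed
  have PC': "acs m A' ` {1..n} \<union> ars n B' ` {1..m} = {1..m+n}"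
  proof (rule card_subset_eq)
    show "finite {1..m+n}" by simp
    show sub: "acs m A' ` {1..n} \<union> ars n B' ` {1..m} \<subseteq> {1..m+n}"
    proof
      fix x assume "x \<in> acs m A' ` {1..n} \<union> ars n B' ` {1..m}"
      then show "x \<in> {1..m+n}"
      proof
        assume "x \<in> acs m A' ` {1..n}"
        then obtain j where "j \<in> {1..n}" "x = acs m A' j" by auto
        then show ?thesis using acs' by auto
      next
        assume "x \<in> ars n B' ` {1..m}"
        then obtain i where "i \<in> {1..m}" "x = ars n B' i" by auto
        then show ?thesis using ars' R_le[of i] by auto
      qed
    qed
    have "card (acs m A' ` {1..n} \<union> ars n B' ` {1..m}) = card (acs m A' ` {1..n}) + card (ars n B' ` {1..m})"
      by (rule card_Un_disjoint) (use disj in auto)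
    also have "\<dots> = n + m"
      using card_image[OF strict_mono_on_imp_inj_on[OF sA']] card_image[OF strict_mono_on_imp_inj_on[OF sB']] by simp
    finally show "card (acs m A' ` {1..n} \<union> ars n B' ` {1..m}) = card {1..m+n}" by simp
  qed
  have fl: "bl_flushed m n B'"
    unfolding bl_flushed_def
  proof (intro ballI impI)
    fix i j i' j' assume i: "i \<in> {1..m}" and j: "j \<in> {1..n}" and h: "B' i j = 1"
      and i': "i' \<in> {i..m}" and j': "j' \<in> {1..j}"
    have "m < i + \<nu> j" using h by (simp add: B'_def split: if_splits)
    moreover have "\<nu> j \<le> \<nu> j'" using nu_mono j j' by auto
    ultimately show "B' i' j' = 1" unfolding B'_def using i' by auto
  qed
  have "syl_rep m n \<mu> \<nu> A' B'" unfolding syl_rep_def PC_def using A'01 B'01 rA' cB' PC' by auto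
  moreover have "sorted_pair m n A' B'" unfolding sorted_pair_def using sA' sB' by auto
  moreover have "flushed_pair m n A' B'" unfolding flushed_pair_def using fl .
  ultimately show ?thesis by blast
qed


end
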